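(* Let $\mathsf A$ be the Manacher array of some string of length $n$, and let $\mathsf F$ be the corresponding palindromic fingerprint. Let $G=G(\mathsf F)$ be its restriction graph. Then: (i) For every proper vertex coloring $\psi:V(G)\to\Sigma$ that uses exactly $k$ colors, the string $T=\psi'(1)\psi'(2)\cdots\psi'(n)$, where $\psi'(i)=\psi(C)$ for the unique vertex $C$ with $i\in C$, has Manacher array $\mathsf A$ and exactly $k$ distinct symbols. (ii) Conversely, for every string $T$ of length $n$ with Manacher array $\mathsf A$, the map $\psi(C):=T[i]$ for any $i\in C$ is well defined and is a proper vertex coloring of $G$, and these two constructions are mutually inverse. In particular, the minimum number of distinct symbols in a string with Manacher array $\mathsf A$ equals $\chi(G)$.
   Context: A substring $S[i..j]$ (including the empty substring $S[i..i-1]$) is a maximal palindrome of $S$ if it is a palindrome and $S[i-1..j+1]$ is either undefined (i.e. $i=1$ or $j=|S|$) or not a palindrome. The palindromic fingerprint $\mathsf F$ of a string $S$ of length $n$ is the set of pairs $(i,j)$ such that $S[i..j]$ is a maximal palindrome (with $(i,i-1)$ for empty ones); $|\mathsf F|:=n$. The fingerprint and the Manacher array determine each other. A string $T$ is a reconstruction of $\mathsf F$ if $|T|=n$ and the fingerprint of $T$ is $\mathsf F$. Equality graph $G_=(\mathsf F)$: vertex set $\{1,\dots,n\}$, with $i,j$ ($i<j$) adjacent iff there is $(a,b)\in\mathsf F$ with $a\le i<j\le b$ and $i+j=a+b$ (so $T[i]=T[j]$ in every reconstruction). Restriction graph $G(\mathsf F)$: its vertices are the connected components $C_1,\dots,C_\ell$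 of $G_=(\mathsf F)$ (these partition $\{1,\dots,n\}$), and $C,C'$ are adjacent iff there exist $i\in C$, $j\in C'$ with $1\le i<j\le n$ and $(i+1,j-1)\in\mathsf F$. A proper coloring assigns colors to vertices so that adjacent vertices get different colors; $\chi(G)$ is the chromatic number. The Manacher array of $S$ of length $n$: $\mathsf A[2k-1]$ is the largest $r\ge0$ with $S[k-r..k+r]$ a palindrome inside $S$, and $\mathsf A[2k]$ the largest $r\ge0$ with $S[k-r+1..k+r]$ a palindrome inside $S$. *)

theory Defs
  imports Main
begin

text \<open>Strings are lists; positions are 1-based as in the paper: S[i] = S ! (i - 1).\<close>

definition pal :: "'a list \<Rightarrow> nat \<Rightarrow> nat \<Rightarrow> bool" where
  "pal S i j \<longleftrightarrow> (\<forall>k. i \<le> k \<and> k \<le> j \<longrightarrow> S ! (k - 1) = S ! (i + j - k - 1))"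

text \<open>Manacher array as a list of length 2n: entry m (1-based) is A[m].\<close>
definition manacher :: "'a list \<Rightarrow> nat list" where
  "manacher S = map (\<lambda>m.
      if odd m then
        (GREATEST r. r + 1 \<le> (m + 1) div 2 \<and> (m + 1) div 2 + r \<le> length S
                     \<and> pal S ((m + 1) div 2 - r) ((m + 1) div 2 + r))
      else
        (GREATEST r. r \<le> m div 2 \<and> m div 2 + r \<le> length S
                     \<and> pal S (m div 2 - r + 1) (m div 2 + r)))
    [1..<2 * length S + 1]"

definition fingerprint :: "'a list \<Rightarrow> (nat \<times> nat) set" where
  "fingerprint S = {(i, j). 1 \<le> i \<and> j \<le> length S \<and> i \<le> j + 1 \<and> pal S i j
        \<and> (i = 1 \<or> j = length S \<or> \<not> pal S (i - 1) (j + 1))}"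

definition eq_edge :: "(nat \<times> nat) set \<Rightarrow> nat \<Rightarrow> nat \<Rightarrow> nat \<Rightarrow> bool" where
  "eq_edge F n i j \<longleftrightarrow> 1 \<le> i \<and> i < j \<and> j \<le> n \<and>
      (\<exists>(a, b) \<in> F. a \<le> i \<and> j \<le> b \<and> i + j = a + b)"

definition eq_rel :: "(nat \<times> nat) set \<Rightarrow> nat \<Rightarrow> (nat \<times> nat) set" where
  "eq_rel F n = {(i, j). eq_edge F n i j \<or> eq_edge F n j i}\<^sup>* \<inter> ({1..n} \<times> {1..n})"

definition verts :: "(nat \<times> nat) set \<Rightarrow> nat \<Rightarrow> nat set set" where
  "verts F n = {1..n} // eq_rel F n"

definition comp :: "(nat \<times> nat) set \<Rightarrow> nat \<Rightarrow> nat \<Rightarrow> nat set" where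
  "comp F n i = eq_rel F n `` {i}"

definition adj :: "(nat \<times> nat) set \<Rightarrow> nat \<Rightarrow> nat set \<Rightarrow> nat set \<Rightarrow> bool" where
  "adj F n C C' \<longleftrightarrow>
     (\<exists>i\<in>C. \<exists>j\<in>C'. 1 \<le> i \<and> i < j \<and> j \<le> n \<and> (i + 1, j - 1) \<in> F) \<or>
     (\<exists>i\<in>C'. \<exists>j\<in>C. 1 \<le> i \<and> i < j \<and> j \<le> n \<and> (i + 1, j - 1) \<in> F)"

definition proper_coloring :: "(nat \<times> nat) set \<Rightarrow> nat \<Rightarrow> (nat set \<Rightarrow> 'b) \<Rightarrow> bool" where
  "proper_coloring F n \<psi> \<longleftrightarrow>
     (\<forall>C\<in>verts F n. \<forall>C'\<in>verts F n. adj F n C C' \<longrightarrow> \<psi> C \<noteq> \<psi> C')"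

definition chromatic_number :: "(nat \<times> nat) set \<Rightarrow> nat \<Rightarrow> nat" where
  "chromatic_number F n =
     (LEAST k. \<exists>\<psi> :: nat set \<Rightarrow> nat. proper_coloring F n \<psi> \<and> card (\<psi> ` verts F n) = k)"

definition string_of :: "(nat \<times> nat) set \<Rightarrow> nat \<Rightarrow> (nat set \<Rightarrow> 'b) \<Rightarrow> 'b list" where
  "string_of F n \<psi> = map (\<lambda>i. \<psi> (comp F n i)) [1..<n + 1]"

definition coloring_of :: "'b list \<Rightarrow> nat set \<Rightarrow> 'b" where
  "coloring_of T C = T ! ((SOME i. i \<in> C) - 1)"

end

theory Submission
  imports Defs
begin

lemma pal_triv: "j \<le> i \<Longrightarrow> i \<le> j + 1 \<Longrightarrow> pal S i j"
  unfolding pal_def by (auto simp: le_Suc_eq)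

lemma pal_step:
  assumes "i < j"
  shows "pal S i j \<longleftrightarrow> S ! (i - 1) = S ! (j - 1) \<and> pal S (i + 1) (j - 1)"
proof
  assume p: "pal S i j"
  have "S ! (i - 1) = S ! (j - 1)" using p[unfolded pal_def, rule_format, of i] assms by simp
  moreover have "pal S (i + 1) (j - 1)"
    unfolding pal_def
  proof (intro allI impI)
    fix k assume "i + 1 \<le> k \<and> k \<le> j - 1"
    then show "S ! (k - 1) = S ! (i + 1 + (j - 1) - k - 1)"
      using p[unfolded pal_def, rule_format, of k] assms by auto
  qed
  ultimately show "S ! (i - 1) = S ! (j - 1) \<and> pal S (i + 1) (j - 1)" by blast
next
  assume q: "S ! (i - 1) = S ! (j - 1) \<and> pal S (i + 1) (j - 1)"
  show "pal S i j"
    unfolding pal_def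
  proof (intro allI impI)
    fix k assume k: "i \<le> k \<and> k \<le> j"
    show "S ! (k - 1) = S ! (i + j - k - 1)"
    proof (cases "k = i \<or> k = j")
      case True then show ?thesis using q assms by auto
    next
      case False
      then have "i + 1 \<le> k \<and> k \<le> j - 1" using k by auto
      then show ?thesis using q[THEN conjunct2, unfolded pal_def, rule_format, of k] assms by auto
    qed
  qed
qed

lemma pal_sub:
  assumes "pal S a b" "a \<le> i" "i + j = a + b"
  shows "pal S i j"
  unfolding pal_def
proof (intro allI impI)
  fix k assume "i \<le> k \<and> k \<le> j"
  then show "S ! (k - 1) = S ! (i + j - k - 1)"
    using assms(1)[unfolded pal_def, rule_format, of k] assms(2,3) by auto
qed

lemma pal_ext:
  "pal S i j \<Longrightarrow> 1 \<le> i \<Longrightarrow> i \<le> j + 1 \<Longrightarrow> j \<le> length S \<Longrightarrow>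
   \<exists>a b. (a, b) \<in> fingerprint S \<and> a \<le> i \<and> a + b = i + j"
proof (induction i arbitrary: j rule: less_induct)
  case (less i)
  show ?case
  proof (cases "i = 1 \<or> j = length S \<or> \<not> pal S (i - 1) (j + 1)")
    case True
    then have "(i, j) \<in> fingerprint S" using less.prems unfolding fingerprint_def by auto
    then show ?thesis by blast
  next
    case False
    then have "i - 1 < i" "pal S (i - 1) (j + 1)" "1 \<le> i - 1" "i - 1 \<le> j + 1 + 1" "j + 1 \<le> length S"
      using less.prems by auto
    from less.IH[OF this] obtain a b where "(a, b) \<in> fingerprint S" "a \<le> i - 1" "a + b = i - 1 + (j + 1)"
      by blast
    then show ?thesis using less.prems by (intro exI[of _ a] exI[of _ b]) auto
  qed
qed

lemma eq_rel_equiv: "equiv {1..n} (eq_rel F n)"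
proof -
  define E where "E = {(i, j). eq_edge F n i j \<or> eq_edge F n j i}"
  have symE: "E\<inverse> = E" unfolding E_def by auto
  have er: "eq_rel F n = E\<^sup>* \<inter> ({1..n} \<times> {1..n})" unfolding eq_rel_def E_def by simp
  have "sym (E\<^sup>*)" by (metis symE sym_conv_converse_eq sym_rtrancl)
  show ?thesis unfolding equiv_def refl_on_def er sym_def trans_def
    using \<open>sym (E\<^sup>*)\<close> unfolding sym_def
    by (auto intro: rtrancl_trans)
qed

lemma eq_rel_letters:
  assumes "\<forall>(a, b) \<in> F. pal U a b" "(x, y) \<in> eq_rel F n"
  shows "U ! (x - 1) = U ! (y - 1)"
proof -
  define E where "E = {(i, j). eq_edge F n i j \<or> eq_edge F n j i}"
  have edge: "U ! (i - 1) = U ! (j - 1)" if "eq_edge F n i j" for i j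
  proof -
    from that obtain a b where ab: "(a, b) \<in> F" "a \<le> i" "j \<le> b" "i + j = a + b" "i < j" "1 \<le> i"
      unfolding eq_edge_def by auto
    then have "pal U a b" using assms(1) by auto
    from this[unfolded pal_def, rule_format, of i] ab have "U ! (i - 1) = U ! (a + b - i - 1)" by auto
    moreover have "a + b - i - 1 = j - 1" using ab by auto
    ultimately show ?thesis by simp
  qed
  have "(x, y) \<in> E\<^sup>*" using assms(2) unfolding eq_rel_def E_def by auto
  then show ?thesis
  proof (induction rule: rtrancl_induct)
    case base then show ?case by simp
  next
    case (step y z)
    then show ?case unfolding E_def using edge by (auto dest: sym)
  qed
qed

definition PO :: "'a list \<Rightarrow> nat \<Rightarrow> nat \<Rightarrow> bool" where
  "PO S c r \<longleftrightarrow> r + 1 \<le> c \<and> c + r \<le> length S \<and> pal S (c - r) (c + r)"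
definition PE :: "'a list \<Rightarrow> nat \<Rightarrow> nat \<Rightarrow> bool" where
  "PE S c r \<longleftrightarrow> r \<le> c \<and> c + r \<le> length S \<and> pal S (c - r + 1) (c + r)"

lemma manacher_alt: "manacher S = map (\<lambda>m. if odd m then (GREATEST r. PO S ((m + 1) div 2) r)
   else (GREATEST r. PE S (m div 2) r)) [1..<2 * length S + 1]"
  unfolding manacher_def PO_def PE_def by simp

lemma manacher_nth:
  assumes "1 \<le> m" "m \<le> 2 * length S"
  shows "manacher S ! (m - 1) = (if odd m then (GREATEST r. PO S ((m + 1) div 2) r)
   else (GREATEST r. PE S (m div 2) r))"
  using assms unfolding manacher_alt by (simp del: upt_Suc)

lemma length_manacher: "length (manacher S) = 2 * length S"
  unfolding manacher_def by (simp del: upt_Suc)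

lemma pal_manacher:
  assumes len: "length S = length T"
    and eqv: "\<And>i j. 1 \<le> i \<Longrightarrow> i \<le> j + 1 \<Longrightarrow> j \<le> length S \<Longrightarrow> (pal S i j \<longleftrightarrow> pal T i j)"
  shows "manacher S = manacher T"
proof -
  have o: "PO S c = PO T c" for c
    unfolding PO_def using eqv len by (intro ext) auto
  have e: "PE S c = PE T c" for c
    unfolding PE_def using eqv len by (intro ext) auto
  show ?thesis unfolding manacher_alt o e len ..
qed

lemma manacher_pal:
  assumes len: "length S = length T" and mm: "manacher S = manacher T"
    and p: "pal S i j" and r: "1 \<le> i" "i \<le> j + 1" "j \<le> length S"
  shows "pal T i j"
proof (cases "j \<le> i")
  case True then show ?thesis using r pal_triv by blast
next
  case False
  define n where "n = length S"
  define m where "m = i + j - 1"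
  have m1: "1 \<le> m" "m \<le> 2 * length S" using False r unfolding m_def by auto
  have eqg: "(if odd m then (GREATEST r. PO S ((m + 1) div 2) r) else (GREATEST r. PE S (m div 2) r))
     = (if odd m then (GREATEST r. PO T ((m + 1) div 2) r) else (GREATEST r. PE T (m div 2) r))"
    using manacher_nth[of m S] manacher_nth[of m T] m1 mm len by simp
  show ?thesis
  proof (cases "odd m")
    case True
    define c where "c = (m + 1) div 2"
    have "even (m + 1)" using True by simp
    then obtain t where t: "m + 1 = 2 * t" by (metis evenE)
    have ct: "c = t" unfolding c_def t by simp
    define r0 where "r0 = t - i"
    have ci: "c - r0 = i" "c + r0 = j" using t \<open>\<not> j \<le> i\<close> r unfolding ct r0_def m_def
      by auto
    have P0: "PO S c r0" unfolding PO_def using ci p r by auto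
    have bS: "\<And>y. PO S c y \<Longrightarrow> y \<le> c" "\<And>y. PO T c y \<Longrightarrow> y \<le> c" unfolding PO_def by auto
    have G: "(GREATEST r. PO S c r) = (GREATEST r. PO T c r)" using eqg True unfolding c_def by simp
    have "r0 \<le> (GREATEST r. PO T c r)" using Greatest_le_nat[of "PO S c", OF P0 bS(1)] G by simp
    moreover have "PO T c 0" unfolding PO_def using ci r len pal_triv[of c c T] by auto
    then have "PO T c (GREATEST r. PO T c r)" using GreatestI_nat bS(2) by blast
    ultimately obtain R where R: "R \<ge> r0" "PO T c R" by blast
    then have "pal T (c - R) (c + R)" "R \<le> c" unfolding PO_def by auto
    moreover have "c - R \<le> i" "i + j = (c - R) + (c + R)" using ci R(1) \<open>R \<le> c\<close> by linarith+
    ultimately show ?thesis using pal_sub by blast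
  next
    case False
    define c where "c = m div 2"
    obtain t where t: "m = 2 * t" using False by (metis evenE)
    have ct: "c = t" unfolding c_def t by simp
    define r0 where "r0 = t + 1 - i"
    have ci: "c - r0 + 1 = i" "c + r0 = j" "r0 \<le> c" using t \<open>\<not> j \<le> i\<close> r unfolding ct r0_def m_def
      by auto
    have P0: "PE S c r0" unfolding PE_def using ci p r by auto
    have bS: "\<And>y. PE S c y \<Longrightarrow> y \<le> c" "\<And>y. PE T c y \<Longrightarrow> y \<le> c" unfolding PE_def by auto
    have G: "(GREATEST r. PE S c r) = (GREATEST r. PE T c r)" using eqg False unfolding c_def by simp
    have "r0 \<le> (GREATEST r. PE T c r)" using Greatest_le_nat[of "PE S c", OF P0 bS(1)] G by simp
    moreover have "PE T c 0" unfolding PE_def using ci r len pal_triv[of c "c + 1" T] by auto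
    then have "PE T c (GREATEST r. PE T c r)" using GreatestI_nat bS(2) by blast
    ultimately obtain R where R: "R \<ge> r0" "PE T c R" by blast
    then have "pal T (c - R + 1) (c + R)" "R \<le> c" unfolding PE_def by auto
    moreover have "c - R + 1 \<le> i" "i + j = (c - R + 1) + (c + R)" using ci R(1) \<open>R \<le> c\<close> by linarith+
    ultimately show ?thesis using pal_sub by blast
  qed
qed

lemma verts_eq: "verts F n = comp F n ` {1..n}"
  unfolding verts_def quotient_def comp_def by auto

lemma comp_self: "i \<in> {1..n} \<Longrightarrow> i \<in> comp F n i"
  unfolding comp_def using equiv_class_self[OF eq_rel_equiv] by blast

lemma in_vert:
  assumes "C \<in> verts F n" "x \<in> C"
  shows "x \<in> {1..n} \<and> C = comp F n x"
proof -
  obtain i where i: "i \<in> {1..n}" "C = comp F n i" using assms(1) verts_eq by blast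
  then have "(i, x) \<in> eq_rel F n" using assms(2) unfolding comp_def by auto
  then show ?thesis using equiv_class_eq_iff[OF eq_rel_equiv] i unfolding comp_def by metis
qed

lemma comp_eq: "(x, y) \<in> eq_rel F n \<Longrightarrow> comp F n x = comp F n y"
  using equiv_class_eq_iff[OF eq_rel_equiv] unfolding comp_def by metis

lemma comp_in_verts: "i \<in> {1..n} \<Longrightarrow> comp F n i \<in> verts F n"
  using verts_eq by blast

lemma string_of_len: "length (string_of F n \<psi>) = n"
  unfolding string_of_def by simp

lemma string_of_nth: "k \<in> {1..n} \<Longrightarrow> string_of F n \<psi> ! (k - 1) = \<psi> (comp F n k)"
  unfolding string_of_def by (auto simp del: upt_Suc)

lemma string_of_set: "set (string_of F n \<psi>) = \<psi> ` verts F n"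
  unfolding string_of_def verts_eq by (auto simp del: upt_Suc)

lemma eq_rel_edge: "eq_edge F n i j \<Longrightarrow> (i, j) \<in> eq_rel F n"
  unfolding eq_rel_def eq_edge_def by auto

lemma F_props:
  assumes "(a, b) \<in> fingerprint S"
  shows "pal S a b" "1 \<le> a" "b \<le> length S" "a \<le> b + 1"
    "a = 1 \<or> b = length S \<or> \<not> pal S (a - 1) (b + 1)"
  using assms unfolding fingerprint_def by auto

lemma const_pal:
  assumes "length U = n" "\<And>x y. (x, y) \<in> eq_rel F n \<Longrightarrow> U ! (x - 1) = U ! (y - 1)"
    and ab: "(a, b) \<in> F" and Fp: "\<And>a b. (a, b) \<in> F \<Longrightarrow> 1 \<le> a \<and> b \<le> n"
  shows "pal U a b"
  unfolding pal_def
proof (intro allI impI)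
  fix k assume k: "a \<le> k \<and> k \<le> b"
  define k' where "k' = a + b - k"
  have r: "1 \<le> a" "b \<le> n" using Fp[OF ab] by auto
  have "U ! (k - 1) = U ! (k' - 1)"
  proof (cases "k < k'")
    case True
    have "eq_edge F n k k'" unfolding eq_edge_def using True k r ab unfolding k'_def
      by (intro conjI bexI[of _ "(a, b)"]) auto
    then show ?thesis using assms(2) eq_rel_edge by blast
  next
    case False
    show ?thesis
    proof (cases "k = k'")
      case True then show ?thesis by simp
    next
      case False
      then have "k' < k" using \<open>\<not> k < k'\<close> by simp
      have "eq_edge F n k' k" unfolding eq_edge_def using \<open>k' < k\<close> k r ab unfolding k'_def
        by (intro conjI bexI[of _ "(a, b)"]) auto
      then show ?thesis using assms(2) eq_rel_edge by metis
    qed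
  qed
  moreover have "k' - 1 = a + b - k - 1" unfolding k'_def by simp
  ultimately show "U ! (k - 1) = U ! (a + b - k - 1)" by simp
qed

lemma part_i_pal:
  assumes len: "length S = n" and Fd: "F = fingerprint S" and pr: "proper_coloring F n \<psi>"
    and r: "1 \<le> i" "i \<le> j + 1" "j \<le> n"
  shows "pal S i j \<longleftrightarrow> pal (string_of F n \<psi>) i j"
proof -
  define T where "T = string_of F n \<psi>"
  have Tl: "length T = n" unfolding T_def by (rule string_of_len)
  have Tn: "T ! (k - 1) = \<psi> (comp F n k)" if "k \<in> {1..n}" for k
    unfolding T_def using that by (rule string_of_nth)
  have Tc: "T ! (x - 1) = T ! (y - 1)" if "(x, y) \<in> eq_rel F n" for x y
  proof -
    have "x \<in> {1..n}" "y \<in> {1..n}" using that unfolding eq_rel_def by auto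
    then show ?thesis using Tn comp_eq[OF that] by simp
  qed
  have Fp: "\<And>a b. (a, b) \<in> F \<Longrightarrow> 1 \<le> a \<and> b \<le> n" using F_props len Fd by blast
  have palF: "pal T a b" if "(a, b) \<in> F" for a b
    using const_pal[OF Tl Tc that Fp] by blast
  have st: "pal S i j" if "pal T i j" "1 \<le> i" "i \<le> j + 1" "j \<le> n" for i j
    using that
  proof (induction "j + 1 - i" arbitrary: i j rule: less_induct)
    case less
    show ?case
    proof (cases "j \<le> i")
      case True then show ?thesis using less.prems pal_triv by blast
    next
      case False
      then have ij: "i < j" by simp
      have T1: "T ! (i - 1) = T ! (j - 1)" "pal T (i + 1) (j - 1)" using pal_step[OF ij] less.prems by auto
      have "pal S (i + 1) (j - 1)"
        using less.hyps[of "j - 1" "i + 1"] T1(2) ij less.prems by auto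
      show ?thesis
      proof (rule ccontr)
        assume np: "\<not> pal S i j"
        have "(i + 1, j - 1) \<in> F" unfolding Fd fingerprint_def
          using np ij less.prems len \<open>pal S (i + 1) (j - 1)\<close> by auto
        then have "adj F n (comp F n i) (comp F n j)" unfolding adj_def
          using ij less.prems comp_self[of i n F] comp_self[of j n F] by fastforce
        moreover have "comp F n i \<in> verts F n" "comp F n j \<in> verts F n"
          using ij less.prems comp_in_verts by auto
        ultimately have "\<psi> (comp F n i) \<noteq> \<psi> (comp F n j)" using pr unfolding proper_coloring_def by blast
        then show False using T1(1) Tn ij less.prems by auto
      qed
    qed
  qed
  have ts: "pal T i j" if ps: "pal S i j"
  proof -
    obtain a b where ab: "(a, b) \<in> fingerprint S" "a \<le> i" "a + b = i + j"
      using pal_ext[OF ps r(1,2)] r(3) len by auto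
    have "pal T a b" using palF ab Fd by blast
    then show ?thesis using pal_sub ab by metis
  qed
  show ?thesis using st ts r unfolding T_def by blast
qed

lemma coloring_of_eq:
  assumes "C \<in> verts F n" "i \<in> C" "\<And>x y. x \<in> C \<Longrightarrow> y \<in> C \<Longrightarrow> T ! (x - 1) = T ! (y - 1)"
  shows "coloring_of T C = T ! (i - 1)"
proof -
  have "(SOME x. x \<in> C) \<in> C" using assms(2) by (rule someI)
  then show ?thesis unfolding coloring_of_def using assms(2,3) by blast
qed

lemma part_ii:
  assumes len: "length S = n" and Fd: "F = fingerprint S"
    and Tl: "length T = n" and mT: "manacher T = manacher S"
  shows "(\<forall>C\<in>verts F n. \<forall>i\<in>C. \<forall>j\<in>C. T ! (i - 1) = T ! (j - 1))
      \<and> proper_coloring F n (coloring_of T)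
      \<and> string_of F n (coloring_of T) = T"
proof -
  have peq: "pal S i j \<longleftrightarrow> pal T i j" if "1 \<le> i" "i \<le> j + 1" "j \<le> n" for i j
    using manacher_pal[of S T i j] manacher_pal[of T S i j] that len Tl mT by auto
  have palF: "\<forall>(a, b)\<in>F. pal T a b"
  proof (clarify)
    fix a b assume "(a, b) \<in> F"
    then have ab: "(a, b) \<in> fingerprint S" using Fd by simp
    show "pal T a b" using peq[OF F_props(2)[OF ab] F_props(4)[OF ab]] F_props(3)[OF ab] F_props(1)[OF ab] len
      by simp
  qed
  have const: "\<forall>C\<in>verts F n. \<forall>i\<in>C. \<forall>j\<in>C. T ! (i - 1) = T ! (j - 1)"
  proof (intro ballI)
    fix C i j assume C: "C \<in> verts F n" "i \<in> C" "j \<in> C"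
    have "i \<in> {1..n}" "j \<in> {1..n}" "comp F n i = comp F n j" using in_vert[OF C(1,2)] in_vert[OF C(1,3)] by auto
    then have "(i, j) \<in> eq_rel F n" using eq_equiv_class_iff[OF eq_rel_equiv] unfolding comp_def by metis
    then show "T ! (i - 1) = T ! (j - 1)" using eq_rel_letters palF by blast
  qed
  have col: "coloring_of T C = T ! (i - 1)" if "C \<in> verts F n" "i \<in> C" for C i
    using coloring_of_eq[OF that] const that by blast
  have proper: "proper_coloring F n (coloring_of T)"
    unfolding proper_coloring_def
  proof (intro ballI impI)
    fix C C' assume C: "C \<in> verts F n" "C' \<in> verts F n" and a: "adj F n C C'"
    have key: "coloring_of T X \<noteq> coloring_of T Y"
      if X: "X \<in> verts F n" "Y \<in> verts F n" "i \<in> X" "j \<in> Y" "1 \<le> i" "i < j" "j \<le> n"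
        "(i + 1, j - 1) \<in> F" for X Y i j
    proof -
      have "pal S (i + 1) (j - 1)" "\<not> pal S i j"
        using F_props[of "i + 1" "j - 1" S] X Fd len by auto
      then have "pal T (i + 1) (j - 1)" "\<not> pal T i j" using peq X by auto
      then have "T ! (i - 1) \<noteq> T ! (j - 1)" using pal_step[of i j T] X by auto
      then show ?thesis using col[OF X(1,3)] col[OF X(2,4)] by simp
    qed
    from a consider (1) "\<exists>i\<in>C. \<exists>j\<in>C'. 1 \<le> i \<and> i < j \<and> j \<le> n \<and> (i + 1, j - 1) \<in> F"
      | (2) "\<exists>i\<in>C'. \<exists>j\<in>C. 1 \<le> i \<and> i < j \<and> j \<le> n \<and> (i + 1, j - 1) \<in> F"
      unfolding adj_def by blast
    then show "coloring_of T C \<noteq> coloring_of T C'"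
    proof cases
      case 1 then show ?thesis using key[OF C(1,2)] by blast
    next
      case 2 then show ?thesis using key[OF C(2,1)] by metis
    qed
  qed
  have so: "string_of F n (coloring_of T) = T"
  proof (rule nth_equalityI)
    show "length (string_of F n (coloring_of T)) = length T" using Tl string_of_len by metis
    fix k assume "k < length (string_of F n (coloring_of T))"
    then have "k < n" using string_of_len by metis
    then have k: "k + 1 \<in> {1..n}" by simp
    have "string_of F n (coloring_of T) ! k = coloring_of T (comp F n (k + 1))"
      using string_of_nth[OF k] by simp
    also have "\<dots> = T ! k" using col[OF comp_in_verts[OF k] comp_self[OF k]] by simp
    finally show "string_of F n (coloring_of T) ! k = T ! k" .
  qed
  show ?thesis using const proper so by blast
qed

lemma part_iii:
  assumes "C \<in> verts F n"
  shows "coloring_of (string_of F n \<psi>) C = \<psi> C"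
proof -
  obtain i0 where "i0 \<in> {1..n}" "C = comp F n i0" using assms verts_eq by blast
  then have "i0 \<in> C" using comp_self by simp
  then have x: "(SOME x. x \<in> C) \<in> C" by (rule someI)
  then have "(SOME x. x \<in> C) \<in> {1..n}" "C = comp F n (SOME x. x \<in> C)" using in_vert[OF assms x] by auto
  then show ?thesis unfolding coloring_of_def using string_of_nth[of "SOME x. x \<in> C" n F \<psi>] by simp
qed

lemma part_i:
  assumes len: "length S = n" and Fd: "F = fingerprint S" and pr: "proper_coloring F n \<psi>"
  shows "manacher (string_of F n \<psi>) = manacher S \<and> card (set (string_of F n \<psi>)) = card (\<psi> ` verts F n)"
proof -
  have "manacher S = manacher (string_of F n \<psi>)"
    by (rule pal_manacher) (use part_i_pal[OF len Fd pr] len string_of_len[of F n \<psi>] in auto)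
  then show ?thesis by (simp add: string_of_set)
qed

theorem theorem4p1:
  fixes S :: "'a list" and A :: "nat list" and F :: "(nat \<times> nat) set" and n :: nat
  assumes "length S = n" and "A = manacher S" and "F = fingerprint S"
  shows
    "(\<forall>(\<psi> :: nat set \<Rightarrow> 'b) k. proper_coloring F n \<psi> \<and> card (\<psi> ` verts F n) = k \<longrightarrow>
        manacher (string_of F n \<psi>) = A \<and> card (set (string_of F n \<psi>)) = k)
   \<and> (\<forall>T :: 'b list. length T = n \<and> manacher T = A \<longrightarrow>
        (\<forall>C\<in>verts F n. \<forall>i\<in>C. \<forall>j\<in>C. T ! (i - 1) = T ! (j - 1))
      \<and> proper_coloring F n (coloring_of T)
      \<and> string_of F n (coloring_of T) = T)
   \<and> (\<forall>\<psi> :: nat set \<Rightarrow> 'b. proper_coloring F n \<psi> \<longrightarrow>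
        (\<forall>C\<in>verts F n. coloring_of (string_of F n \<psi>) C = \<psi> C))
   \<and> (LEAST k. \<exists>T :: nat list. length T = n \<and> manacher T = A \<and> card (set T) = k)
       = chromatic_number F n"
proof -
  have P: "(\<exists>T :: nat list. length T = n \<and> manacher T = A \<and> card (set T) = k) \<longleftrightarrow>
      (\<exists>\<psi> :: nat set \<Rightarrow> nat. proper_coloring F n \<psi> \<and> card (\<psi> ` verts F n) = k)" for k
  proof
    assume "\<exists>T :: nat list. length T = n \<and> manacher T = A \<and> card (set T) = k"
    then obtain T :: "nat list" where T: "length T = n" "manacher T = A" "card (set T) = k" by blast
    have h: "proper_coloring F n (coloring_of T)" "string_of F n (coloring_of T) = T"
      using part_ii[OF assms(1,3) T(1)] T(2) assms(2) by auto
    have "coloring_of T ` verts F n = set T" using string_of_set h(2) by metis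
    then show "\<exists>\<psi> :: nat set \<Rightarrow> nat. proper_coloring F n \<psi> \<and> card (\<psi> ` verts F n) = k"
      using h T by metis
  next
    assume "\<exists>\<psi> :: nat set \<Rightarrow> nat. proper_coloring F n \<psi> \<and> card (\<psi> ` verts F n) = k"
    then obtain \<psi> :: "nat set \<Rightarrow> nat" where p: "proper_coloring F n \<psi>" "card (\<psi> ` verts F n) = k" by blast
    show "\<exists>T :: nat list. length T = n \<and> manacher T = A \<and> card (set T) = k"
      using part_i[OF assms(1,3) p(1)] p(2) assms(2) string_of_len by metis
  qed
  have h1: "\<forall>(\<psi> :: nat set \<Rightarrow> 'b) k. proper_coloring F n \<psi> \<and> card (\<psi> ` verts F n) = k \<longrightarrow>
        manacher (string_of F n \<psi>) = A \<and> card (set (string_of F n \<psi>)) = k"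
    using part_i[OF assms(1,3)] assms(2) by metis
  have h2: "\<forall>T :: 'b list. length T = n \<and> manacher T = A \<longrightarrow>
        (\<forall>C\<in>verts F n. \<forall>i\<in>C. \<forall>j\<in>C. T ! (i - 1) = T ! (j - 1))
      \<and> proper_coloring F n (coloring_of T)
      \<and> string_of F n (coloring_of T) = T"
    using part_ii[OF assms(1,3)] assms(2) by metis
  have h3: "\<forall>\<psi> :: nat set \<Rightarrow> 'b. proper_coloring F n \<psi> \<longrightarrow>
        (\<forall>C\<in>verts F n. coloring_of (string_of F n \<psi>) C = \<psi> C)"
    using part_iii by blast
  have h4: "(LEAST k. \<exists>T :: nat list. length T = n \<and> manacher T = A \<and> card (set T) = k)
       = chromatic_number F n" by (simp only: chromatic_number_def P)
  show ?thesis using h1 h2 h3 h4 by (intro conjI)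
qed

end
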